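(* Let $G$ be a finite simple graph and $k$ a positive integer. Let $G'$ be the graph formed from $G$ by adding a vertex-disjoint copy of the complete bipartite graph $K_{k-1,2k}$, and let $G^\phi_k$ be the complement of $G'$. Then $G$ contains $K_{k,k}$ as a subgraph if and only if $\widetilde{\alpha}(G^\phi_k) \ge 2k$.
   Context: For disjoint vertex sets $S,T$, $E(S,T)$ is the set of edges with one end in $S$ and one in $T$. An $(s,t)$-bipartite-hole in a graph $F$ consists of two disjoint sets of vertices $S,T$ with $|S|=s$, $|T|=t$ and $E(S,T)=\emptyset$. The bipartite-hole-number $\widetilde{\alpha}(F)$ is the least integer $r$ which can be written as $r=s+t-1$ for some positive integers $s,t$ such that $F$ contains no $(s,t)$-bipartite-hole; equivalently the maximum $r$ such that $F$ has an $(s,t)$-bipartite-hole for all non-negative integers $s,t$ with $s+t=r$. $K_{a,b}$ denotes the complete bipartite graph with parts of sizes $a$ and $b$. *)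

theory Defs
  imports Main
begin

definition simple_graph :: "'a set \<Rightarrow> ('a \<Rightarrow> 'a \<Rightarrow> bool) \<Rightarrow> bool" where
  "simple_graph V E \<longleftrightarrow> finite V \<and> (\<forall>u v. E u v \<longrightarrow> E v u)
     \<and> (\<forall>u. \<not> E u u) \<and> (\<forall>u v. E u v \<longrightarrow> u \<in> V \<and> v \<in> V)"

definition contains_Kab :: "'a set \<Rightarrow> ('a \<Rightarrow> 'a \<Rightarrow> bool) \<Rightarrow> nat \<Rightarrow> nat \<Rightarrow> bool" where
  "contains_Kab V E a b \<longleftrightarrow> (\<exists>A B. A \<subseteq> V \<and> B \<subseteq> V \<and> A \<inter> B = {} \<and>
      card A = a \<and> card B = b \<and> (\<forall>x\<in>A. \<forall>y\<in>B. E x y))"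

definition bip_hole :: "'a set \<Rightarrow> ('a \<Rightarrow> 'a \<Rightarrow> bool) \<Rightarrow> nat \<Rightarrow> nat \<Rightarrow> bool" where
  "bip_hole V E s t \<longleftrightarrow> (\<exists>S T. S \<subseteq> V \<and> T \<subseteq> V \<and> S \<inter> T = {} \<and>
      card S = s \<and> card T = t \<and> (\<forall>x\<in>S. \<forall>y\<in>T. \<not> E x y))"

definition bip_hole_number :: "'a set \<Rightarrow> ('a \<Rightarrow> 'a \<Rightarrow> bool) \<Rightarrow> nat" where
  "bip_hole_number V E = (LEAST r. \<exists>s t. 1 \<le> s \<and> 1 \<le> t \<and> r = s + t - 1 \<and> \<not> bip_hole V E s t)"

definition Kab_vertices :: "nat \<Rightarrow> nat \<Rightarrow> nat set" where
  "Kab_vertices a b = {0..<a+b}"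

definition Kab_edge :: "nat \<Rightarrow> nat \<Rightarrow> nat \<Rightarrow> nat \<Rightarrow> bool" where
  "Kab_edge a b i j \<longleftrightarrow> (i < a \<and> a \<le> j \<and> j < a + b) \<or> (j < a \<and> a \<le> i \<and> i < a + b)"

definition union_vertices :: "'a set \<Rightarrow> 'b set \<Rightarrow> ('a + 'b) set" where
  "union_vertices V W = Inl ` V \<union> Inr ` W"

fun union_edge :: "('a \<Rightarrow> 'a \<Rightarrow> bool) \<Rightarrow> ('b \<Rightarrow> 'b \<Rightarrow> bool) \<Rightarrow> 'a + 'b \<Rightarrow> 'a + 'b \<Rightarrow> bool" where
  "union_edge E F (Inl x) (Inl y) = E x y"
| "union_edge E F (Inr x) (Inr y) = F x y"
| "union_edge E F _ _ = False"

definition compl_edge :: "'a set \<Rightarrow> ('a \<Rightarrow> 'a \<Rightarrow> bool) \<Rightarrow> 'a \<Rightarrow> 'a \<Rightarrow> bool" where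
  "compl_edge V E u v \<longleftrightarrow> u \<in> V \<and> v \<in> V \<and> u \<noteq> v \<and> \<not> E u v"

definition Gphi_vertices :: "'a set \<Rightarrow> nat \<Rightarrow> ('a + nat) set" where
  "Gphi_vertices V k = union_vertices V (Kab_vertices (k - 1) (2 * k))"

definition Gphi_edge :: "'a set \<Rightarrow> ('a \<Rightarrow> 'a \<Rightarrow> bool) \<Rightarrow> nat \<Rightarrow> ('a + nat) \<Rightarrow> ('a + nat) \<Rightarrow> bool" where
  "Gphi_edge V E k = compl_edge (Gphi_vertices V k) (union_edge E (Kab_edge (k - 1) (2 * k)))"

end

theory Submission
  imports Defs
begin

lemma bhn_ge:
  assumes fin: "finite VV"
  shows "bip_hole_number VV EE \<ge> n \<longleftrightarrow>
    (\<forall>s t. 1 \<le> s \<longrightarrow> 1 \<le> t \<longrightarrow> s + t - 1 < n \<longrightarrow> bip_hole VV EE s t)"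
proof -
  let ?P = "\<lambda>r. \<exists>s t. 1 \<le> s \<and> 1 \<le> t \<and> r = s + t - 1 \<and> \<not> bip_hole VV EE s t"
  have nh: "\<not> bip_hole VV EE (card VV + 1) 1"
  proof
    assume "bip_hole VV EE (card VV + 1) 1"
    then obtain S where "S \<subseteq> VV" "card S = card VV + 1" unfolding bip_hole_def by blast
    then have "card S \<le> card VV" using card_mono[OF fin] by blast
    then show False using \<open>card S = card VV + 1\<close> by simp
  qed
  have ex: "?P (card VV + 1 + 1 - 1)"
    apply (rule exI[of _ "card VV + 1"], rule exI[of _ 1]) using nh by simp
  show ?thesis
  proof
    assume h: "n \<le> bip_hole_number VV EE"
    show "\<forall>s t. 1 \<le> s \<longrightarrow> 1 \<le> t \<longrightarrow> s + t - 1 < n \<longrightarrow> bip_hole VV EE s t"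
    proof (intro allI impI, rule ccontr)
      fix s t assume a: "1 \<le> s" "1 \<le> t" "s + t - 1 < n" "\<not> bip_hole VV EE s t"
      then have "?P (s + t - 1)" by blast
      then have "bip_hole_number VV EE \<le> s + t - 1" unfolding bip_hole_number_def
        by (rule Least_le)
      with h a(3) show False by simp
    qed
  next
    assume h: "\<forall>s t. 1 \<le> s \<longrightarrow> 1 \<le> t \<longrightarrow> s + t - 1 < n \<longrightarrow> bip_hole VV EE s t"
    have "?P (bip_hole_number VV EE)" unfolding bip_hole_number_def by (rule LeastI[where P="?P", OF ex])
    then obtain s t where b: "1 \<le> s" "1 \<le> t" "bip_hole_number VV EE = s + t - 1"
      "\<not> bip_hole VV EE s t" by blast
    show "n \<le> bip_hole_number VV EE"
    proof (rule ccontr)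
      assume "\<not> n \<le> bip_hole_number VV EE"
      then have "s + t - 1 < n" using b(3) by simp
      then show False using h b by blast
    qed
  qed
qed

lemma hole_iff:
  "bip_hole (Gphi_vertices V k) (Gphi_edge V E k) s t \<longleftrightarrow>
   (\<exists>S T. S \<subseteq> Gphi_vertices V k \<and> T \<subseteq> Gphi_vertices V k \<and> S \<inter> T = {} \<and>
      card S = s \<and> card T = t \<and> (\<forall>x\<in>S. \<forall>y\<in>T. union_edge E (Kab_edge (k - 1) (2 * k)) x y))"
  (is "?L \<longleftrightarrow> ?R")
proof
  assume ?L
  then obtain S T where h: "S \<subseteq> Gphi_vertices V k" "T \<subseteq> Gphi_vertices V k" "S \<inter> T = {}"
      "card S = s" "card T = t" "\<forall>x\<in>S. \<forall>y\<in>T. \<not> Gphi_edge V E k x y"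
    unfolding bip_hole_def by blast
  have "\<forall>x\<in>S. \<forall>y\<in>T. union_edge E (Kab_edge (k - 1) (2 * k)) x y"
  proof (intro ballI)
    fix x y assume xy: "x \<in> S" "y \<in> T"
    then have "x \<noteq> y" "x \<in> Gphi_vertices V k" "y \<in> Gphi_vertices V k" using h(1-3) by blast+
    with h(6) xy show "union_edge E (Kab_edge (k - 1) (2 * k)) x y"
      unfolding Gphi_edge_def compl_edge_def by blast
  qed
  with h(1-5) show ?R by blast
next
  assume ?R
  then obtain S T where h: "S \<subseteq> Gphi_vertices V k" "T \<subseteq> Gphi_vertices V k" "S \<inter> T = {}"
      "card S = s" "card T = t" "\<forall>x\<in>S. \<forall>y\<in>T. union_edge E (Kab_edge (k - 1) (2 * k)) x y"
    by blast
  have "\<forall>x\<in>S. \<forall>y\<in>T. \<not> Gphi_edge V E k x y"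
    using h(6) unfolding Gphi_edge_def compl_edge_def by blast
  with h(1-5) show ?L unfolding bip_hole_def by blast
qed

lemma card_Inr_le: "S \<subseteq> Inr ` {0..<m} \<Longrightarrow> card S \<le> m"
  by (metis card_atLeastLessThan card_image_le card_mono diff_zero finite_atLeastLessThan
      finite_imageI order_trans)

theorem lemma12:
  fixes V :: "'a set" and E :: "'a \<Rightarrow> 'a \<Rightarrow> bool" and k :: nat
  assumes "simple_graph V E" and "1 \<le> k"
  shows "contains_Kab V E k k \<longleftrightarrow>
         bip_hole_number (Gphi_vertices V k) (Gphi_edge V E k) \<ge> 2 * k"
proof -
  let ?K = "Kab_edge (k - 1) (2 * k)"
  let ?GV = "Gphi_vertices V k"
  have finV: "finite V" using assms(1) unfolding simple_graph_def by blast
  have fin: "finite ?GV" using finV unfolding Gphi_vertices_def union_vertices_def Kab_vertices_def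
    by simp
  show ?thesis
    unfolding bhn_ge[OF fin] hole_iff
  proof
    assume "contains_Kab V E k k"
    then obtain A B where AB: "A \<subseteq> V" "B \<subseteq> V" "A \<inter> B = {}" "card A = k" "card B = k"
      "\<forall>x\<in>A. \<forall>y\<in>B. E x y" unfolding contains_Kab_def by blast
    show "\<forall>s t. 1 \<le> s \<longrightarrow> 1 \<le> t \<longrightarrow> s + t - 1 < 2 * k \<longrightarrow>
      (\<exists>S T. S \<subseteq> ?GV \<and> T \<subseteq> ?GV \<and> S \<inter> T = {} \<and> card S = s \<and> card T = t \<and>
         (\<forall>x\<in>S. \<forall>y\<in>T. union_edge E ?K x y))"
    proof (intro allI impI)
      fix s t assume st: "1 \<le> s" "1 \<le> t" "s + t - 1 < 2 * k"
      consider "s \<le> k - 1" | "t \<le> k - 1" | "s = k" "t = k" using st by linarith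
      then show "\<exists>S T. S \<subseteq> ?GV \<and> T \<subseteq> ?GV \<and> S \<inter> T = {} \<and> card S = s \<and> card T = t \<and>
         (\<forall>x\<in>S. \<forall>y\<in>T. union_edge E ?K x y)"
      proof cases
        case 1
        show ?thesis
          apply (rule exI[of _ "Inr ` {0..<s}"], rule exI[of _ "Inr ` {k-1..<k-1+t}"])
          apply (intro conjI)
          using 1 st apply (auto simp: Gphi_vertices_def union_vertices_def Kab_vertices_def)[2]
             using 1 apply force
          apply (simp add: card_image)
           apply (simp add: card_image)
          using 1 st apply (auto simp: Kab_edge_def)
          done
      next
        case 2
        show ?thesis
          apply (rule exI[of _ "Inr ` {k-1..<k-1+s}"], rule exI[of _ "Inr ` {0..<t}"])
          apply (intro conjI)
          using 2 st apply (auto simp: Gphi_vertices_def union_vertices_def Kab_vertices_def)[2]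
             using 2 apply force
          apply (simp add: card_image)
           apply (simp add: card_image)
          using 2 st apply (auto simp: Kab_edge_def)
          done
      next
        case 3
        show ?thesis
          apply (rule exI[of _ "Inl ` A"], rule exI[of _ "Inl ` B"])
          apply (intro conjI)
          using AB apply (auto simp: Gphi_vertices_def union_vertices_def)[2]
             using AB(3) apply blast
          using 3 AB apply (simp add: card_image)
           using 3 AB apply (simp add: card_image)
          using AB(6) apply auto
          done
      qed
    qed
  next
    assume h: "\<forall>s t. 1 \<le> s \<longrightarrow> 1 \<le> t \<longrightarrow> s + t - 1 < 2 * k \<longrightarrow>
      (\<exists>S T. S \<subseteq> ?GV \<and> T \<subseteq> ?GV \<and> S \<inter> T = {} \<and> card S = s \<and> card T = t \<and>
         (\<forall>x\<in>S. \<forall>y\<in>T. union_edge E ?K x y))"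
    then obtain S T where ST: "S \<subseteq> ?GV" "T \<subseteq> ?GV" "S \<inter> T = {}" "card S = k" "card T = k"
      "\<forall>x\<in>S. \<forall>y\<in>T. union_edge E ?K x y"
    proof -
      have "k + k - 1 < 2 * k" using assms(2) by simp
      from h[rule_format, OF assms(2) assms(2) this] show thesis using that by blast
    qed
    have "S \<noteq> {}" "T \<noteq> {}" using ST(4,5) assms(2) by auto
    then obtain x0 y0 where x0: "x0 \<in> S" and y0: "y0 \<in> T" by blast
    show "contains_Kab V E k k"
    proof (cases x0)
      case (Inl a0)
      have Tl: "\<forall>y\<in>T. \<exists>b. y = Inl b"
      proof
        fix y assume "y \<in> T" then have "union_edge E ?K x0 y" using ST(6) x0 by blast
        then show "\<exists>b. y = Inl b" using Inl by (cases y) auto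
      qed
      then obtain b0 where b0: "y0 = Inl b0" using y0 by blast
      have Sl: "\<forall>x\<in>S. \<exists>a. x = Inl a"
      proof
        fix x assume "x \<in> S" then have "union_edge E ?K x y0" using ST(6) y0 by blast
        then show "\<exists>a. x = Inl a" using b0 by (cases x) auto
      qed
      define A where "A = {a. Inl a \<in> S}"
      define B where "B = {b. Inl b \<in> T}"
      have SA: "S = Inl ` A" using Sl unfolding A_def by auto
      have TB: "T = Inl ` B" using Tl unfolding B_def by auto
      show ?thesis unfolding contains_Kab_def
        apply (rule exI[of _ A], rule exI[of _ B])
        apply (intro conjI)
        using ST(1) SA apply (force simp: Gphi_vertices_def union_vertices_def)
        using ST(2) TB apply (force simp: Gphi_vertices_def union_vertices_def)
        using ST(3) SA TB apply blast
        using ST(4) SA apply (simp add: card_image)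
        using ST(5) TB apply (simp add: card_image)
        using ST(6) SA TB apply simp
        done
    next
      case (Inr i0)
      have Tr: "\<forall>y\<in>T. \<exists>b. y = Inr b"
      proof
        fix y assume "y \<in> T" then have "union_edge E ?K x0 y" using ST(6) x0 by blast
        then show "\<exists>b. y = Inr b" using Inr by (cases y) auto
      qed
      then obtain j0 where j0: "y0 = Inr j0" using y0 by blast
      have Sr: "\<forall>x\<in>S. \<exists>a. x = Inr a"
      proof
        fix x assume "x \<in> S" then have "union_edge E ?K x y0" using ST(6) y0 by blast
        then show "\<exists>a. x = Inr a" using j0 by (cases x) auto
      qed
      show ?thesis
      proof (cases "j0 < k - 1")
        case True
        have i0: "k - 1 \<le> i0"
        proof -
          have "union_edge E ?K x0 y0" using ST(6) x0 y0 by blast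
          then show ?thesis using Inr j0 True by (simp add: Kab_edge_def)
        qed
        have "\<forall>y\<in>T. \<exists>b. y = Inr b \<and> b < k - 1"
        proof
          fix y assume y: "y \<in> T"
          then obtain b where b: "y = Inr b" using Tr by blast
          have "union_edge E ?K x0 y" using ST(6) x0 y by blast
          then show "\<exists>b. y = Inr b \<and> b < k - 1" using Inr b i0 by (auto simp add: Kab_edge_def)
        qed
        then have "T \<subseteq> Inr ` {0..<k-1}" by auto
        from card_Inr_le[OF this] ST(5) assms(2) show ?thesis by simp
      next
        case False
        have "\<forall>x\<in>S. \<exists>a. x = Inr a \<and> a < k - 1"
        proof
          fix x assume x: "x \<in> S"
          then obtain a where a: "x = Inr a" using Sr by blast
          have "union_edge E ?K x y0" using ST(6) x y0 by blast
          then show "\<exists>a. x = Inr a \<and> a < k - 1" using a j0 False by (auto simp add: Kab_edge_def)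
        qed
        then have "S \<subseteq> Inr ` {0..<k-1}" by auto
        from card_Inr_le[OF this] ST(4) assms(2) show ?thesis by simp
      qed
    qed
  qed
qed

end
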